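(* Let $f \colon \mathbb{R}^n \to \mathbb{R}$ and $g \colon \mathbb{R}^n \to \mathbb{R}^m$ be continuously differentiable, let $X \subseteq \mathbb{R}^m$ be nonempty and closed, let $\rho>0$, and let $p^\rho(y) = \sum_{i=1}^n p_i^\rho(y_i)$ where each $p_i^\rho$ satisfies (P.1)–(P.3) below. Let $(x^*,y^* )$ be a stationary point of (SPOref) in the sense defined below. Then there exists $\alpha^*>0$ such that $(x^*,y^* )$ is a stationary point of Pen$(\alpha)$ (in the sense defined below) for all $\alpha\ge\alpha^*$.
   Context: Conditions on each $p_i^\rho\colon\mathbb{R}\to\mathbb{R}$: (P.1) convex with a unique minimizer $s_i^\rho>0$; (P.2) $p_i^\rho(0)-p_i^\rho(s_i^\rho)=\rho$; (P.3) continuously differentiable. Notation: $I_0(z)=\{i : z_i=0\}$, $|x| = (|x_1|,\dots,|x_n|)^T$, $\circ$ the componentwise product, $e_i$ the $i$-th unit vector, $g'(x)$ the Jacobian of $g$, $N^{\lim}_X$ the limiting (Mordukhovich) normal cone to $X$ (the outer limit of Fréchet normal cones, where the Fréchet normal cone is the polar of the Bouligand tangent cone). (SPOref) is $\min_{x,y} f(x)+p^\rho(y)$ s.t. $g(x)\in X$, $x\circ y=0$, $y\ge0$. A feasible point $(x^*,y^* )$ of (SPOref) is stationary if there exist $\lambda^*\in N^{\lim}_X(g(x^* ))$, reals $\gamma_i^x$ ($i\in I_0(x^* )$), $\gamma_i^y$ and $\nu_i^*\ge 0$ ($i\in I_0(y^* )$) with $0 = \nabla f(x^* ) + g'(x^*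 )^T\lambda^* + \sum_{i\in I_0(x^* )} \gamma_i^x y_i^* e_i$ and $0 = \nabla p^\rho(y^* ) + \sum_{i\in I_0(y^* )}(\gamma_i^y x_i^* - \nu_i^* ) e_i$. Pen$(\alpha)$ is $\min_{x,y} f(x)+p^\rho(y)+\alpha|x|^Ty$ s.t. $g(x)\in X$, $y\ge 0$. A point $(x^*,y^* )$ is stationary for Pen$(\alpha)$ if $g(x^* )\in X$, $y^*\ge0$, and there exist $\lambda\in N^{\lim}_X(g(x^* ))$ and $\gamma_i\ge 0$ ($i\in I_0(y^* )$) such that $0\in \nabla f(x^* ) + \alpha\, y^*\circ\partial(|x^*|) + g'(x^* )^T\lambda$ and $0 = \nabla p^\rho(y^* ) + \alpha|x^*| - \sum_{i\in I_0(y^* )}\gamma_i e_i$, where $y^*\circ\partial(|x^*|) = \{y^*\circ s : s_i = \operatorname{sign}(x_i^* ) \text{ if } x_i^*\ne0,\ s_i\in[-1,1] \text{ if } x_i^*=0\}$. *)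

theory Defs
  imports "HOL-Analysis.Analysis"
begin

definition tangent_cone :: "('a::real_normed_vector) set \<Rightarrow> 'a \<Rightarrow> 'a set" where
  "tangent_cone X z = {d. \<exists>t zs. (\<forall>k. t k > 0 \<and> zs k \<in> X) \<and> t \<longlonglongrightarrow> 0 \<and>
        zs \<longlonglongrightarrow> z \<and> (\<lambda>k. (1 / t k) *\<^sub>R (zs k - z)) \<longlonglongrightarrow> d}"

definition frechet_normal_cone :: "('a::real_inner) set \<Rightarrow> 'a \<Rightarrow> 'a set" where
  "frechet_normal_cone X z = (if z \<in> X then {v. \<forall>d\<in>tangent_cone X z. inner v d \<le> 0} else {})"

definition limiting_normal_cone :: "('a::real_inner) set \<Rightarrow> 'a \<Rightarrow> 'a set" where
  "limiting_normal_cone X z = {v. \<exists>zs vs. (\<forall>k. zs k \<in> X \<and> vs k \<in> frechet_normal_cone X (zs k)) \<and>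
        zs \<longlonglongrightarrow> z \<and> vs \<longlonglongrightarrow> v}"

(* Stationarity for (SPOref); gradf = gradient of f, Jg = Jacobian of g,
   pd i = derivative of p_i^rho, so grad p^rho(y) = (pd i (y$i))_i. *)
definition SPOref_stationary ::
  "(real^'n \<Rightarrow> real^'n) \<Rightarrow> (real^'n \<Rightarrow> real^'n^'m) \<Rightarrow> (real^'n \<Rightarrow> real^'m) \<Rightarrow> (real^'m) set
   \<Rightarrow> ('n \<Rightarrow> real \<Rightarrow> real) \<Rightarrow> real^'n \<Rightarrow> real^'n \<Rightarrow> bool" where
  "SPOref_stationary gradf Jg g X pd x y \<longleftrightarrow>
     g x \<in> X \<and> (\<forall>i. x$i * y$i = 0) \<and> (\<forall>i. y$i \<ge> 0) \<and>
     (\<exists>lam \<in> limiting_normal_cone X (g x). \<exists>gx gy nu :: 'n \<Rightarrow> real.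
        (\<forall>i. y$i = 0 \<longrightarrow> nu i \<ge> 0) \<and>
        0 = gradf x + transpose (Jg x) *v lam + (\<chi> i. if x$i = 0 then gx i * y$i else 0) \<and>
        0 = (\<chi> i. pd i (y$i)) + (\<chi> i. if y$i = 0 then gy i * x$i - nu i else 0))"

definition Pen_stationary ::
  "(real^'n \<Rightarrow> real^'n) \<Rightarrow> (real^'n \<Rightarrow> real^'n^'m) \<Rightarrow> (real^'n \<Rightarrow> real^'m) \<Rightarrow> (real^'m) set
   \<Rightarrow> ('n \<Rightarrow> real \<Rightarrow> real) \<Rightarrow> real \<Rightarrow> real^'n \<Rightarrow> real^'n \<Rightarrow> bool" where
  "Pen_stationary gradf Jg g X pd \<alpha> x y \<longleftrightarrow>
     g x \<in> X \<and> (\<forall>i. y$i \<ge> 0) \<and>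
     (\<exists>lam \<in> limiting_normal_cone X (g x). \<exists>gam :: 'n \<Rightarrow> real.
        (\<forall>i. y$i = 0 \<longrightarrow> gam i \<ge> 0) \<and>
        (\<exists>s :: real^'n. (\<forall>i. x$i \<noteq> 0 \<longrightarrow> s$i = sgn (x$i)) \<and>
                        (\<forall>i. x$i = 0 \<longrightarrow> s$i \<in> {-1..1}) \<and>
           0 = gradf x + \<alpha> *\<^sub>R (\<chi> i. y$i * s$i) + transpose (Jg x) *v lam) \<and>
        0 = (\<chi> i. pd i (y$i)) + \<alpha> *\<^sub>R (\<chi> i. \<bar>x$i\<bar>) - (\<chi> i. if y$i = 0 then gam i else 0))"

end

theory Submission
  imports Defs
begin

theorem mainTheorem3:
  fixes f :: "real^'n \<Rightarrow> real" and gradf :: "real^'n \<Rightarrow> real^'n"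
    and g :: "real^'n \<Rightarrow> real^'m" and Jg :: "real^'n \<Rightarrow> real^'n^'m"
    and X :: "(real^'m) set" and \<rho> :: real
    and p :: "'n \<Rightarrow> real \<Rightarrow> real" and pd :: "'n \<Rightarrow> real \<Rightarrow> real" and s :: "'n \<Rightarrow> real"
    and xs ys :: "real^'n"
  assumes f_C1: "\<forall>x. (f has_derivative (\<lambda>h. inner (gradf x) h)) (at x)" "continuous_on UNIV gradf"
    and g_C1: "\<forall>x. (g has_derivative (\<lambda>h. Jg x *v h)) (at x)" "continuous_on UNIV Jg"
    and X_ne: "X \<noteq> {}" and X_closed: "closed X"
    and rho_pos: "\<rho> > 0"
    and P1: "\<forall>i. convex_on UNIV (p i) \<and> s i > 0 \<and> (\<forall>t. t \<noteq> s i \<longrightarrow> p i (s i) < p i t)"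
    and P2: "\<forall>i. p i 0 - p i (s i) = \<rho>"
    and P3: "\<forall>i. (\<forall>t. (p i has_real_derivative pd i t) (at t)) \<and> continuous_on UNIV (pd i)"
    and stat: "SPOref_stationary gradf Jg g X pd xs ys"
  shows "\<exists>\<alpha>0 > 0. \<forall>\<alpha> \<ge> \<alpha>0. Pen_stationary gradf Jg g X pd \<alpha> xs ys"
proof -
  from stat have gX: "g xs \<in> X" and comp: "\<And>i. xs$i * ys$i = 0" and ynn: "\<And>i. ys$i \<ge> 0"
    unfolding SPOref_stationary_def by auto
  from stat obtain lam gx gy nu where lam: "lam \<in> limiting_normal_cone X (g xs)"
    and nu: "\<And>i. ys$i = 0 \<Longrightarrow> nu i \<ge> 0"
    and e1: "0 = gradf xs + transpose (Jg xs) *v lam + (\<chi> i. if xs$i = 0 then gx i * ys$i else 0)"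
    and e2: "0 = (\<chi> i. pd i (ys$i)) + (\<chi> i. if ys$i = 0 then gy i * xs$i - nu i else 0)"
    unfolding SPOref_stationary_def by blast
  have e2i: "\<And>i. 0 = pd i (ys$i) + (if ys$i = 0 then gy i * xs$i - nu i else 0)"
    using e2 by (simp add: vec_eq_iff)
  define a0 where "a0 = 1 + (\<Sum>i\<in>UNIV. \<bar>gx i\<bar> + \<bar>pd i 0\<bar> / \<bar>xs$i\<bar>)"
  have nn: "\<And>i. 0 \<le> \<bar>gx i\<bar> + \<bar>pd i 0\<bar> / \<bar>xs$i\<bar>" by simp
  have le: "\<And>i. \<bar>gx i\<bar> + \<bar>pd i 0\<bar> / \<bar>xs$i\<bar> < a0"
  proof -
    fix i
    have "\<bar>gx i\<bar> + \<bar>pd i 0\<bar> / \<bar>xs$i\<bar> \<le> (\<Sum>i\<in>UNIV. \<bar>gx i\<bar> + \<bar>pd i 0\<bar> / \<bar>xs$i\<bar>)"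
      by (rule member_le_sum) (auto simp: nn)
    then show "\<bar>gx i\<bar> + \<bar>pd i 0\<bar> / \<bar>xs$i\<bar> < a0" unfolding a0_def by simp
  qed
  have a0pos: "a0 > 0" using le[of undefined] nn[of undefined] by linarith
  show ?thesis
  proof (intro exI[of _ a0] conjI allI impI a0pos)
    fix \<alpha> :: real assume ha: "a0 \<le> \<alpha>"
    have apos: "\<alpha> > 0" using ha a0pos by linarith
    have gxle: "\<bar>gx i\<bar> < \<alpha>" for i
    proof -
      have "0 \<le> \<bar>pd i 0\<bar> / \<bar>xs$i\<bar>" by simp
      thus ?thesis using le[of i] ha by linarith
    qed
    have pdle: "\<bar>pd i 0\<bar> / \<bar>xs$i\<bar> < \<alpha>" for i
    proof -
      have "0 \<le> \<bar>gx i\<bar>" by simp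
      thus ?thesis using le[of i] ha by linarith
    qed
    define sv :: "real^'n" where "sv = (\<chi> i. if xs$i \<noteq> 0 then sgn (xs$i) else if ys$i = 0 then 0 else gx i / \<alpha>)"
    define gam where "gam = (\<lambda>i. pd i (ys$i) + \<alpha> * \<bar>xs$i\<bar>)"
    have s1: "\<forall>i. xs$i \<noteq> 0 \<longrightarrow> sv$i = sgn (xs$i)" by (simp add: sv_def)
    have s2: "\<forall>i. xs$i = 0 \<longrightarrow> sv$i \<in> {-1..1}"
    proof (intro allI impI)
      fix i assume "xs$i = 0"
      have "\<bar>gx i / \<alpha>\<bar> \<le> 1" using gxle[of i] apos by (simp add: abs_divide)
      then have "-1 \<le> gx i / \<alpha> \<and> gx i / \<alpha> \<le> 1" by (simp only: abs_le_iff) auto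
      then show "sv$i \<in> {-1..1}" using \<open>xs$i = 0\<close> by (auto simp: sv_def)
    qed
    have vv: "\<alpha> *\<^sub>R (\<chi> i. ys$i * sv$i) = (\<chi> i. if xs$i = 0 then gx i * ys$i else 0)"
    proof (subst vec_eq_iff, intro allI)
      fix i
      show "(\<alpha> *\<^sub>R (\<chi> i. ys$i * sv$i))$i = (\<chi> i. if xs$i = 0 then gx i * ys$i else 0)$i"
        using comp[of i] apos by (auto simp: sv_def)
    qed
    have eq1: "0 = gradf xs + \<alpha> *\<^sub>R (\<chi> i. ys$i * sv$i) + transpose (Jg xs) *v lam"
      using e1 unfolding vv by (simp add: algebra_simps)
    have gamnn: "\<forall>i. ys$i = 0 \<longrightarrow> gam i \<ge> 0"
    proof (intro allI impI)
      fix i assume y0: "ys$i = 0"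
      have pd0: "pd i 0 = nu i - gy i * xs$i" using e2i[of i] y0 by simp
      show "gam i \<ge> 0"
      proof (cases "xs$i = 0")
        case True thus ?thesis using pd0 nu[OF y0] y0 by (simp add: gam_def)
      next
        case False
        hence "\<bar>xs$i\<bar> > 0" by simp
        hence "\<bar>pd i 0\<bar> < \<alpha> * \<bar>xs$i\<bar>" using pdle[of i] by (simp add: divide_less_eq mult.commute)
        thus ?thesis using y0 by (simp add: gam_def)
      qed
    qed
    have eq2: "0 = (\<chi> i. pd i (ys$i)) + \<alpha> *\<^sub>R (\<chi> i. \<bar>xs$i\<bar>) - (\<chi> i. if ys$i = 0 then gam i else 0)"
    proof (subst vec_eq_iff, intro allI)
      fix i
      show "(0::real^'n)$i = ((\<chi> i. pd i (ys$i)) + \<alpha> *\<^sub>R (\<chi> i. \<bar>xs$i\<bar>) - (\<chi> i. if ys$i = 0 then gam i else 0))$i"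
      proof (cases "ys$i = 0")
        case True thus ?thesis by (simp add: gam_def)
      next
        case False
        hence "xs$i = 0" using comp[of i] by simp
        thus ?thesis using e2i[of i] False by simp
      qed
    qed
    show "Pen_stationary gradf Jg g X pd \<alpha> xs ys"
      unfolding Pen_stationary_def
      apply (intro conjI gX allI ynn bexI[OF _ lam] exI[of _ gam])
      using gamnn apply blast
      using s1 s2 eq1 apply blast
      by (rule eq2)
  qed
qed

end
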